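(* Let $N\ge3$, let $\Sigma\subseteq\mathbb{R}^N$ be a convex cone with vertex at the origin, and let $\Omega$, $\Gamma_1\subset\partial\Sigma$ and $\nu$ be as in the Setting in the context. If $\Gamma_1$ contains a transversally nondegenerate point, then $\mathrm{span}_{x\in \Gamma_1} \nu(x) =\mathbb{R}^N$.
   Context: Setting. $\Omega\subset\mathbb{R}^N$ is a smooth bounded domain such that $\Sigma\cap\Omega$ is a bounded domain whose relative boundary $\Gamma_0:=\Sigma\cap\partial\Omega$ is smooth, $\partial\Gamma_0$ is an $(N-2)$-dimensional manifold, and $\partial(\Sigma\cap\Omega)\setminus\Gamma_0$ is smooth outside a singular set $\mathcal{S}\subset\partial\Sigma$ with $\limsup_{r\to 0^+} r^{\ell-N}|\{x:\mathrm{dist}(x,\mathcal{S})\le r\}|<\infty$ for some $0\le\ell\le N-2$. $\Gamma_1:=\partial(\Sigma\cap\Omega)\setminus(\overline{\Gamma}_0\cup\overline{\mathcal{S}})$ (a relatively open subset of $\partial\Sigma$ around each point of which $\partial\Sigma$ is of class $C^2$), and $\nu$ is the exterior unit normal on $\Gamma_1$. A point $x\in\partial\Sigma$ around which $\partial\Sigma$ is of class $C^2$ is called transversally nondegenerate if the second fundamental form of $\partial\Sigma$ at $x$, restricted to the tangent directions to $\partial\Sigma$ at $x$ which are orthogonal to $x$, has all eigenvalues different from zero. *)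

theory Defs
  imports "HOL-Analysis.Analysis"
begin

definition convex_cone_vertex0 :: "(real^'n) set \<Rightarrow> bool" where
  "convex_cone_vertex0 A \<longleftrightarrow> convex A \<and> (\<forall>x\<in>A. \<forall>t::real. t > 0 \<longrightarrow> t *\<^sub>R x \<in> A)"

definition bounded_domain :: "(real^'n) set \<Rightarrow> bool" where
  "bounded_domain D \<longleftrightarrow> D \<noteq> {} \<and> open D \<and> connected D \<and> bounded D"

text \<open>A local C^2 defining function for the boundary of A near x:
  g is C^2 on the open neighbourhood U of x (gradient G, Hessian H, H continuous),
  the gradient does not vanish, A lies locally on the side g < 0 and the boundary
  of A is the zero set of g.\<close>
definition C2_chart ::
  "(real^'n) set \<Rightarrow> real^'n \<Rightarrow> (real^'n) set \<Rightarrow> (real^'n \<Rightarrow> real)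
    \<Rightarrow> (real^'n \<Rightarrow> real^'n) \<Rightarrow> (real^'n \<Rightarrow> real^'n \<Rightarrow> real^'n) \<Rightarrow> bool" where
  "C2_chart A x U g G H \<longleftrightarrow> open U \<and> x \<in> U \<and>
     (\<forall>y\<in>U. (g has_derivative (\<lambda>h. G y \<bullet> h)) (at y) \<and> (G has_derivative H y) (at y)
             \<and> G y \<noteq> 0) \<and>
     (\<forall>v. continuous_on U (\<lambda>y. H y v)) \<and>
     U \<inter> interior A = {y\<in>U. g y < 0} \<and> U \<inter> frontier A = {y\<in>U. g y = 0}"

definition boundary_C2_at :: "(real^'n) set \<Rightarrow> real^'n \<Rightarrow> bool" where
  "boundary_C2_at A x \<longleftrightarrow> (\<exists>U g G H. C2_chart A x U g G H)"

definition exterior_unit_normal :: "(real^'n) set \<Rightarrow> real^'n \<Rightarrow> real^'n \<Rightarrow> bool" where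
  "exterior_unit_normal A x n \<longleftrightarrow>
     (\<exists>U g G H. C2_chart A x U g G H \<and> n = (1 / norm (G x)) *\<^sub>R G x)"

text \<open>Second fundamental form at x (w.r.t. the exterior normal), computed from a
  defining function: II(v,w) = D^2 g(x)[v,w] / |grad g(x)| for tangent v, w.\<close>
definition second_fundamental_form ::
  "(real^'n \<Rightarrow> real^'n) \<Rightarrow> (real^'n \<Rightarrow> real^'n \<Rightarrow> real^'n) \<Rightarrow> real^'n
     \<Rightarrow> real^'n \<Rightarrow> real^'n \<Rightarrow> real" where
  "second_fundamental_form G H x v w = (H x v \<bullet> w) / norm (G x)"

definition restricted_eigenvalue ::
  "(real^'n \<Rightarrow> real^'n \<Rightarrow> real) \<Rightarrow> (real^'n) set \<Rightarrow> real \<Rightarrow> bool" where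
  "restricted_eigenvalue B T lam \<longleftrightarrow>
     (\<exists>v\<in>T. v \<noteq> 0 \<and> (\<forall>w\<in>T. B v w = lam * (v \<bullet> w)))"

definition transversally_nondegenerate :: "(real^'n) set \<Rightarrow> real^'n \<Rightarrow> bool" where
  "transversally_nondegenerate A x \<longleftrightarrow>
     (\<exists>U g G H. C2_chart A x U g G H \<and>
        (\<forall>lam. restricted_eigenvalue (second_fundamental_form G H x)
                  {v. G x \<bullet> v = 0 \<and> x \<bullet> v = 0} lam \<longrightarrow> lam \<noteq> 0))"

end

theory Submission
  imports Defs
begin


lemma curve_eps:
  fixes g :: "real^'n \<Rightarrow> real" and G :: "real^'n \<Rightarrow> real^'n"
  assumes U: "open U" "x \<in> U" and dg: "\<forall>y\<in>U. (g has_derivative (\<lambda>h. G y \<bullet> h)) (at y)"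
    and gx: "g x = 0" and Gx: "G x \<noteq> 0" and v: "G x \<bullet> v = 0" and eta: "\<eta> > 0"
  shows "\<exists>s0>0. \<forall>s. 0 < s \<and> s < s0 \<longrightarrow> (\<exists>\<tau>. \<bar>\<tau>\<bar> \<le> \<eta> * s \<and> x + s *\<^sub>R v + \<tau> *\<^sub>R G x \<in> U
            \<and> g (x + s *\<^sub>R v + \<tau> *\<^sub>R G x) = 0)"
proof -
  define n where "n = G x"
  define m where "m = n \<bullet> n"
  have m: "m > 0" using Gx by (simp add: m_def n_def)
  obtain \<rho> where \<rho>: "\<rho> > 0" "ball x \<rho> \<subseteq> U" using U openE by blast
  define c where "c = norm v + \<eta> * norm n"
  have c: "c > 0" using Gx eta by (simp add: c_def n_def add_nonneg_pos)
  define \<epsilon> where "\<epsilon> = \<eta> * m / (2 * c)"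
  have \<epsilon>: "\<epsilon> > 0" using eta m c by (simp add: \<epsilon>_def)
  have "(g has_derivative (\<lambda>h. n \<bullet> h)) (at x)" using dg U by (simp add: n_def)
  then obtain \<delta> where \<delta>: "\<delta> > 0" and
    d: "\<And>y. norm (y - x) < \<delta> \<Longrightarrow> norm (g y - g x - n \<bullet> (y - x)) \<le> \<epsilon> * norm (y - x)"
    using \<epsilon> unfolding has_derivative_at_alt by blast
  define s0 where "s0 = min \<delta> \<rho> / c"
  have s0: "s0 > 0" using \<delta> \<rho> c by (simp add: s0_def)
  show ?thesis
  proof (rule exI[of _ s0], intro conjI s0 allI impI)
    fix s assume s: "0 < s \<and> s < s0"
    define p where "p = (\<lambda>\<tau>::real. x + s *\<^sub>R v + \<tau> *\<^sub>R n)"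
    have pn: "norm (p \<tau> - x) < min \<delta> \<rho>" if "\<bar>\<tau>\<bar> \<le> \<eta> * s" for \<tau>
    proof -
      have "norm (p \<tau> - x) = norm (s *\<^sub>R v + \<tau> *\<^sub>R n)" by (simp add: p_def)
      also have "\<dots> \<le> s * norm v + \<bar>\<tau>\<bar> * norm n"
        using s by (metis abs_of_pos norm_scaleR norm_triangle_ineq)
      also have "\<dots> \<le> s * norm v + (\<eta> * s) * norm n"
        using that by (simp add: mult_right_mono)
      also have "\<dots> = s * c" by (simp add: c_def algebra_simps)
      also have "\<dots> < s0 * c" using s c by simp
      also have "\<dots> = min \<delta> \<rho>" using c by (simp add: s0_def)
      finally show ?thesis .
    qed
    have pU: "p \<tau> \<in> U" if "\<bar>\<tau>\<bar> \<le> \<eta> * s" for \<tau>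
      using pn[OF that] \<rho> by (auto simp: dist_norm norm_minus_commute)
    have est: "\<bar>g (p \<tau>) - \<tau> * m\<bar> \<le> \<eta> * m * s / 2" if "\<bar>\<tau>\<bar> \<le> \<eta> * s" for \<tau>
    proof -
      have "n \<bullet> (p \<tau> - x) = \<tau> * m"
        using v by (simp add: p_def n_def m_def inner_add_right)
      then have "\<bar>g (p \<tau>) - \<tau> * m\<bar> \<le> \<epsilon> * norm (p \<tau> - x)"
        using d[of "p \<tau>"] pn[OF that] gx by simp
      also have "\<dots> \<le> \<epsilon> * (s * c)"
      proof -
        have "norm (p \<tau> - x) \<le> s * norm v + \<bar>\<tau>\<bar> * norm n"
          using s by (simp add: p_def) (metis abs_of_pos norm_scaleR norm_triangle_ineq)
        also have "\<dots> \<le> s * c"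
          using mult_right_mono[OF that norm_ge_zero[of n]] by (simp add: c_def algebra_simps)
        finally show ?thesis using \<epsilon> by simp
      qed
      also have "\<dots> = \<eta> * m * s / 2" using c by (simp add: \<epsilon>_def)
      finally show ?thesis .
    qed
    have cont: "continuous_on (atLeastAtMost (-(\<eta> * s)) (\<eta> * s)) (\<lambda>\<tau>. g (p \<tau>))"
    proof (rule continuous_on_compose2[of U g])
      show "continuous_on U g"
        using dg by (intro has_derivative_continuous_on) (auto intro: has_derivative_at_withinI)
      show "continuous_on (atLeastAtMost (-(\<eta> * s)) (\<eta> * s)) p" unfolding p_def by (intro continuous_intros)
      show "p ` (atLeastAtMost (-(\<eta> * s)) (\<eta> * s)) \<subseteq> U" using pU by auto
    qed
    have ab: "-(\<eta> * s) \<le> \<eta> * s" using eta s by simp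
    have pos: "\<eta> * s * m > 0" using eta s m by simp
    have e1: "\<bar>g (p (-(\<eta> * s))) - (-(\<eta> * s)) * m\<bar> \<le> \<eta> * m * s / 2"
      using est[of "-(\<eta> * s)"] ab by simp
    have e2: "\<bar>g (p (\<eta> * s)) - (\<eta> * s) * m\<bar> \<le> \<eta> * m * s / 2"
      using est[of "\<eta> * s"] ab by simp
    have eq: "\<eta> * m * s = \<eta> * s * m" by simp
    have "g (p (-(\<eta> * s))) \<le> 0"
      using e1 pos unfolding eq abs_le_iff by simp
    moreover have "0 \<le> g (p (\<eta> * s))"
      using e2 pos unfolding eq abs_le_iff by simp
    ultimately obtain \<tau> where "-(\<eta> * s) \<le> \<tau>" "\<tau> \<le> \<eta> * s" "g (p \<tau>) = 0"
      using IVT'[OF _ _ ab cont] by blast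
    then show "\<exists>\<tau>. \<bar>\<tau>\<bar> \<le> \<eta> * s \<and> x + s *\<^sub>R v + \<tau> *\<^sub>R G x \<in> U \<and> g (x + s *\<^sub>R v + \<tau> *\<^sub>R G x) = 0"
      using pU[of \<tau>] by (intro exI[of _ \<tau>]) (auto simp: p_def n_def)
  qed
qed

lemma curve_seq:
  fixes g :: "real^'n \<Rightarrow> real" and G :: "real^'n \<Rightarrow> real^'n"
  assumes U: "open U" "x \<in> U" and dg: "\<forall>y\<in>U. (g has_derivative (\<lambda>h. G y \<bullet> h)) (at y)"
    and gx: "g x = 0" and Gx: "G x \<noteq> 0" and v: "G x \<bullet> v = 0"
  shows "\<exists>s \<tau>. (\<forall>k. s k > 0 \<and> x + s k *\<^sub>R v + \<tau> k *\<^sub>R G x \<in> U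
            \<and> g (x + s k *\<^sub>R v + \<tau> k *\<^sub>R G x) = 0) \<and> s \<longlonglongrightarrow> 0 \<and> (\<lambda>k. \<tau> k / s k) \<longlonglongrightarrow> 0"
proof -
  have "\<forall>k. \<exists>s0>0. \<forall>s. 0 < s \<and> s < s0 \<longrightarrow> (\<exists>\<tau>. \<bar>\<tau>\<bar> \<le> inverse (real (Suc k)) * s \<and> x + s *\<^sub>R v + \<tau> *\<^sub>R G x \<in> U
            \<and> g (x + s *\<^sub>R v + \<tau> *\<^sub>R G x) = 0)"
    using curve_eps[OF U dg gx Gx v] by simp
  then obtain s0 where s0: "\<And>k. s0 k > 0" and
    s0P: "\<And>k s. 0 < s \<and> s < s0 k \<Longrightarrow> (\<exists>\<tau>. \<bar>\<tau>\<bar> \<le> inverse (real (Suc k)) * s \<and> x + s *\<^sub>R v + \<tau> *\<^sub>R G x \<in> U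
            \<and> g (x + s *\<^sub>R v + \<tau> *\<^sub>R G x) = 0)"
    by metis
  define s where "s k = min (s0 k / 2) (inverse (real (Suc k)))" for k
  have s: "0 < s k \<and> s k < s0 k" for k using s0[of k] by (simp add: s_def)
  have "\<forall>k. \<exists>\<tau>. \<bar>\<tau>\<bar> \<le> inverse (real (Suc k)) * s k \<and> x + s k *\<^sub>R v + \<tau> *\<^sub>R G x \<in> U
            \<and> g (x + s k *\<^sub>R v + \<tau> *\<^sub>R G x) = 0"
    using s0P s by blast
  then obtain \<tau> where \<tau>: "\<And>k. \<bar>\<tau> k\<bar> \<le> inverse (real (Suc k)) * s k \<and> x + s k *\<^sub>R v + \<tau> k *\<^sub>R G x \<in> U
            \<and> g (x + s k *\<^sub>R v + \<tau> k *\<^sub>R G x) = 0"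
    by metis
  have "s \<longlonglongrightarrow> 0"
  proof (rule tendsto_sandwich[OF _ _ tendsto_const LIMSEQ_inverse_real_of_nat])
    show "\<forall>\<^sub>F k in sequentially. 0 \<le> s k" using s by (simp add: less_imp_le)
    show "\<forall>\<^sub>F k in sequentially. s k \<le> inverse (real (Suc k))" by (simp add: s_def)
  qed
  moreover have "(\<lambda>k. \<tau> k / s k) \<longlonglongrightarrow> 0"
  proof (rule tendsto_norm_zero_cancel, rule tendsto_sandwich[OF _ _ tendsto_const LIMSEQ_inverse_real_of_nat])
    show "\<forall>\<^sub>F k in sequentially. 0 \<le> norm (\<tau> k / s k)" by simp
    show "\<forall>\<^sub>F k in sequentially. norm (\<tau> k / s k) \<le> inverse (real (Suc k))"
    proof (intro always_eventually allI)
      fix k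
      have "\<bar>\<tau> k\<bar> \<le> inverse (real (Suc k)) * s k" using \<tau> by blast
      then show "norm (\<tau> k / s k) \<le> inverse (real (Suc k))"
        using s[of k] by (simp add: abs_div pos_divide_le_eq)
    qed
  qed
  ultimately show ?thesis using \<tau> s by blast
qed

lemma deriv_vanish:
  fixes g \<phi> :: "real^'n \<Rightarrow> real" and G :: "real^'n \<Rightarrow> real^'n"
  assumes U: "open U" "x \<in> U" and dg: "\<forall>y\<in>U. (g has_derivative (\<lambda>h. G y \<bullet> h)) (at y)"
    and gx: "g x = 0" and Gx: "G x \<noteq> 0" and v: "G x \<bullet> v = 0"
    and dphi: "(\<phi> has_derivative D) (at x)" and van: "\<forall>y\<in>U. g y = 0 \<longrightarrow> \<phi> y = 0"
  shows "D v = 0"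
proof -
  obtain s \<tau> where st: "\<And>k. s k > 0 \<and> x + s k *\<^sub>R v + \<tau> k *\<^sub>R G x \<in> U
            \<and> g (x + s k *\<^sub>R v + \<tau> k *\<^sub>R G x) = 0" and s0: "s \<longlonglongrightarrow> 0" and r0: "(\<lambda>k. \<tau> k / s k) \<longlonglongrightarrow> 0"
    using curve_seq[OF U dg gx Gx v] by blast
  define r where "r k = \<tau> k / s k" for k
  define y where "y k = x + s k *\<^sub>R v + \<tau> k *\<^sub>R G x" for k
  have bl: "bounded_linear D" using dphi by (rule has_derivative_bounded_linear)
  then have lin: "linear D" by (rule bounded_linear.linear)
  have yx: "y k - x = s k *\<^sub>R (v + r k *\<^sub>R G x)" for k
    using st[of k] by (simp add: y_def r_def scaleR_add_right)
  have phix: "\<phi> x = 0" using van U gx by blast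
  have phiy: "\<phi> (y k) = 0" for k using van st[of k] by (simp add: y_def)
  have r0': "r \<longlonglongrightarrow> 0" using r0 by (simp add: r_def[abs_def])
  have ylim: "y \<longlonglongrightarrow> x"
  proof -
    have "(\<lambda>k. x + s k *\<^sub>R (v + r k *\<^sub>R G x)) \<longlonglongrightarrow> x + 0 *\<^sub>R (v + 0 *\<^sub>R G x)"
      by (intro tendsto_intros s0 r0')
    moreover have "(\<lambda>k. x + s k *\<^sub>R (v + r k *\<^sub>R G x)) = y"
      using yx by (auto simp: algebra_simps fun_eq_iff)
    ultimately show ?thesis by simp
  qed
  have Dlim: "(\<lambda>k. \<bar>D (v + r k *\<^sub>R G x)\<bar>) \<longlonglongrightarrow> \<bar>D (v + 0 *\<^sub>R G x)\<bar>"
    by (intro tendsto_intros bounded_linear.tendsto[OF bl] r0')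
  have Nlim: "(\<lambda>k. e * norm (v + r k *\<^sub>R G x)) \<longlonglongrightarrow> e * norm (v + 0 *\<^sub>R G x)" for e
    by (intro tendsto_intros r0')
  have le: "\<bar>D v\<bar> \<le> e * norm v" if e: "e > 0" for e
  proof -
    obtain d where d: "d > 0" and
      dd: "\<And>z. norm (z - x) < d \<Longrightarrow> norm (\<phi> z - \<phi> x - D (z - x)) \<le> e * norm (z - x)"
      using dphi e unfolding has_derivative_at_alt by blast
    have ev: "\<forall>\<^sub>F k in sequentially. dist (y k) x < d" using ylim d by (rule tendstoD)
    have "\<forall>\<^sub>F k in sequentially. \<bar>D (v + r k *\<^sub>R G x)\<bar> \<le> e * norm (v + r k *\<^sub>R G x)"
    proof (rule eventually_mono[OF ev])
      fix k assume "dist (y k) x < d"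
      then have "norm (\<phi> (y k) - \<phi> x - D (y k - x)) \<le> e * norm (y k - x)"
        using dd by (simp add: dist_norm)
      moreover have "\<phi> (y k) - \<phi> x - D (y k - x) = - (s k * D (v + r k *\<^sub>R G x))"
        using phix phiy[of k] yx[of k] by (simp add: linear_scale[OF lin])
      moreover have "norm (y k - x) = s k * norm (v + r k *\<^sub>R G x)"
        using yx[of k] st[of k] by simp
      ultimately have "s k * \<bar>D (v + r k *\<^sub>R G x)\<bar> \<le> s k * (e * norm (v + r k *\<^sub>R G x))"
        using st[of k] by (simp add: abs_mult)
      then show "\<bar>D (v + r k *\<^sub>R G x)\<bar> \<le> e * norm (v + r k *\<^sub>R G x)"
        using st[of k] by simp
    qed
    from tendsto_le[OF _ Nlim Dlim this] show ?thesis by simp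
  qed
  show ?thesis
  proof (rule ccontr)
    assume "D v \<noteq> 0"
    then have a: "\<bar>D v\<bar> > 0" by simp
    define e where "e = \<bar>D v\<bar> / (2 * (norm v + 1))"
    have "e > 0" using a by (simp add: e_def add_nonneg_pos)
    from le[OF this] have "\<bar>D v\<bar> \<le> \<bar>D v\<bar> * (norm v / (2 * (norm v + 1)))" by (simp add: e_def)
    moreover have "norm v / (2 * (norm v + 1)) < 1" by (simp add: divide_less_eq add_nonneg_pos)
    ultimately show False using a mult_strict_left_mono[of _ 1 "\<bar>D v\<bar>"] by fastforce
  qed
qed



lemma transpose_kernel:
  fixes M :: "real^'n \<Rightarrow> real^'n" and a b w :: "real^'n"
  assumes lin: "linear M" and ab: "a \<bullet> b = 0" and T: "T = {v. a \<bullet> v = 0 \<and> b \<bullet> v = 0}"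
    and w: "w \<in> T" "w \<noteq> 0" and hw: "\<forall>v\<in>T. M v \<bullet> w = 0"
  shows "\<exists>u\<in>T. u \<noteq> 0 \<and> (\<forall>v\<in>T. M u \<bullet> v = 0)"
proof -
  define P where "P v = v - ((v \<bullet> a) / (a \<bullet> a)) *\<^sub>R a - ((v \<bullet> b) / (b \<bullet> b)) *\<^sub>R b" for v
  have PT: "P v \<in> T" for v
  proof -
    have "a \<bullet> P v = 0"
      by (cases "a = 0") (auto simp: P_def inner_diff_right ab inner_commute)
    moreover have "b \<bullet> P v = 0"
      by (cases "b = 0") (auto simp: P_def inner_diff_right ab inner_commute)
    ultimately show ?thesis by (simp add: T)
  qed
  have Pid: "P v = v" if "v \<in> T" for v
    using that by (simp add: T P_def inner_commute)
  have Psym: "P u \<bullet> v = u \<bullet> P v" for u v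
    by (simp add: P_def inner_diff_left inner_diff_right inner_commute algebra_simps)
  have linP: "linear P"
    by (rule linearI) (simp_all add: P_def inner_add_left add_divide_distrib scaleR_add_left algebra_simps)
  define A where "A v = P (M (P v)) + (v - P v)" for v
  have linA: "linear A"
    by (rule linearI) (simp_all add: A_def linear_add[OF linP] linear_add[OF lin] linear_scale[OF linP]
        linear_scale[OF lin] algebra_simps)
  have Aw: "A u \<bullet> w = 0" for u
  proof -
    have "A u \<bullet> w = M (P u) \<bullet> P w + u \<bullet> w - P u \<bullet> w"
      by (simp add: A_def inner_add_left inner_diff_left Psym)
    also have "\<dots> = 0" using hw PT[of u] Pid[OF w(1)] Psym[of u w] by simp
    finally show ?thesis .
  qed
  have "\<not> surj A"
  proof
    assume "surj A"
    then obtain u where "A u = w" by (metis surjD)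
    with Aw[of u] w(2) show False by simp
  qed
  then have "\<not> inj A" using linear_injective_imp_surjective[OF linA] by blast
  then obtain u where u: "u \<noteq> 0" "A u = 0" using linear_injective_0[OF linA] by blast
  have PP: "P (P v) = P v" for v using Pid[OF PT] .
  have "P (M (P u)) \<bullet> (u - P u) = 0"
    using Psym[of "M (P u)" "u - P u"] linear_diff[OF linP, of u "P u"] PP[of u]
    by (simp add: Psym)
  then have "(u - P u) \<bullet> (u - P u) = 0"
    using u(2) unfolding A_def by (metis add_diff_cancel_left' diff_0 inner_minus_left neg_0_equal_iff_equal add.commute
        inner_add_left add_0)
  then have uP: "P u = u" by simp
  then have uT: "u \<in> T" using PT[of u] by simp
  have PMu: "P (M u) = 0" using u(2) uP by (simp add: A_def)
  show ?thesis
  proof (intro bexI[OF _ uT] conjI u(1) ballI)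
    fix v assume "v \<in> T"
    then have "M u \<bullet> v = M u \<bullet> P v" by (simp add: Pid)
    also have "\<dots> = P (M u) \<bullet> v" by (simp add: Psym)
    finally show "M u \<bullet> v = 0" using PMu by simp
  qed
qed

lemma joint_cont:
  fixes H :: "real^'n \<Rightarrow> real^'n \<Rightarrow> real^'n"
  assumes cont: "\<forall>v. continuous_on U (\<lambda>y. H y v)" and lin: "\<forall>y\<in>U. linear (H y)"
    and y: "y \<longlonglongrightarrow> x" "x \<in> U" "\<forall>k. y k \<in> U" and w: "w' \<longlonglongrightarrow> w"
  shows "(\<lambda>k. H (y k) (w' k)) \<longlonglongrightarrow> H x w"
proof -
  have rep: "H z u = (\<Sum>i\<in>Basis. (u \<bullet> i) *\<^sub>R H z i)" if "z \<in> U" for z u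
  proof -
    have "H z u = H z (\<Sum>i\<in>Basis. (u \<bullet> i) *\<^sub>R i)" by (simp add: euclidean_representation)
    also have "\<dots> = (\<Sum>i\<in>Basis. (u \<bullet> i) *\<^sub>R H z i)"
      using lin that by (simp add: linear_sum linear_scale)
    finally show ?thesis .
  qed
  have Hi: "(\<lambda>k. H (y k) i) \<longlonglongrightarrow> H x i" for i
    using continuous_on_tendsto_compose[OF cont[rule_format, of i] y(1) y(2)] y(3) by simp
  have "(\<lambda>k. \<Sum>i\<in>Basis. (w' k \<bullet> i) *\<^sub>R H (y k) i) \<longlonglongrightarrow> (\<Sum>i\<in>Basis. (w \<bullet> i) *\<^sub>R H x i)"
    by (intro tendsto_intros w Hi)
  then show ?thesis using rep y(2,3) by simp
qed

lemma cone_frontier: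
  assumes cone: "convex_cone_vertex0 S" and z: "z \<in> frontier S" and t: "t > 0"
  shows "t *\<^sub>R z \<in> frontier S"
proof -
  have sc: "c *\<^sub>R p \<in> S" if "p \<in> S" "c > 0" for p c using cone that by (simp add: convex_cone_vertex0_def)
  show ?thesis
    unfolding frontier_straddle
  proof (intro allI impI conjI)
    fix e :: real assume e: "e > 0"
    then have e': "e / t > 0" using t by simp
    from z e' obtain p q where p: "p \<in> S" "dist z p < e / t" and q: "q \<notin> S" "dist z q < e / t"
      unfolding frontier_straddle by blast
    have dd: "dist (t *\<^sub>R z) (t *\<^sub>R r) = t * dist z r" for r
      using t by (simp add: dist_norm scaleR_diff_right[symmetric])
    show "\<exists>x\<in>S. dist (t *\<^sub>R z) x < e"
      using sc[OF p(1) t] dd[of p] p(2) t by (intro bexI[of _ "t *\<^sub>R p"]) (auto simp: field_simps)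
    have "t *\<^sub>R q \<notin> S"
    proof
      assume "t *\<^sub>R q \<in> S"
      from sc[OF this, of "inverse t"] t q(1) show False by simp
    qed
    then show "\<exists>x. x \<notin> S \<and> dist (t *\<^sub>R z) x < e"
      using dd[of q] q(2) t by (intro exI[of _ "t *\<^sub>R q"]) (auto simp: field_simps)
  qed
qed



theorem proposition2p15:
  fixes \<Sigma> \<Omega> Sing :: "(real^'n) set"
    and \<nu> :: "real^'n \<Rightarrow> real^'n"
    and l :: real
  assumes N3: "CARD('n) \<ge> 3"
    and cone: "convex_cone_vertex0 \<Sigma>"
    and Omega: "bounded_domain \<Omega>"
    and Omega_C2: "\<forall>x\<in>frontier \<Omega>. boundary_C2_at \<Omega> x"
    and SigOm: "bounded_domain (\<Sigma> \<inter> \<Omega>)"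
    and sing: "Sing \<subseteq> frontier \<Sigma>"
    and ell: "0 \<le> l" "l \<le> real CARD('n) - 2"
    and sing_size: "Limsup (at_right 0)
          (\<lambda>r::real. ennreal (r powr (l - real CARD('n))) *
              emeasure lborel {x. \<exists>s\<in>closure Sing. dist x s \<le> r}) < \<infinity>"
    and Gamma1_sub: "frontier (\<Sigma> \<inter> \<Omega>) - (closure (\<Sigma> \<inter> frontier \<Omega>) \<union> closure Sing)
                       \<subseteq> frontier \<Sigma>"
    and Gamma1_open: "openin (top_of_set (frontier \<Sigma>))
          (frontier (\<Sigma> \<inter> \<Omega>) - (closure (\<Sigma> \<inter> frontier \<Omega>) \<union> closure Sing))"
    and Gamma1_C2: "\<forall>x \<in> frontier (\<Sigma> \<inter> \<Omega>) - (closure (\<Sigma> \<inter> frontier \<Omega>) \<union> closure Sing).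
          boundary_C2_at \<Sigma> x"
    and normal: "\<forall>x \<in> frontier (\<Sigma> \<inter> \<Omega>) - (closure (\<Sigma> \<inter> frontier \<Omega>) \<union> closure Sing).
          exterior_unit_normal \<Sigma> x (\<nu> x)"
    and nondeg: "\<exists>x \<in> frontier (\<Sigma> \<inter> \<Omega>) - (closure (\<Sigma> \<inter> frontier \<Omega>) \<union> closure Sing).
          transversally_nondegenerate \<Sigma> x"
  shows "span (\<nu> ` (frontier (\<Sigma> \<inter> \<Omega>) - (closure (\<Sigma> \<inter> frontier \<Omega>) \<union> closure Sing)))
           = UNIV"
proof -
  define Gam where "Gam = frontier (\<Sigma> \<inter> \<Omega>) - (closure (\<Sigma> \<inter> frontier \<Omega>) \<union> closure Sing)"
  note GamF = Gamma1_sub[folded Gam_def]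
  note Gopen = Gamma1_open[folded Gam_def]
  note normal' = normal[folded Gam_def]
  note nondeg' = nondeg[folded Gam_def]
  show ?thesis unfolding Gam_def[symmetric]
  proof (rule ccontr)
    assume nsp: "span (\<nu> ` Gam) \<noteq> UNIV"
    obtain x0 where x0G: "x0 \<in> Gam" and x0nd: "transversally_nondegenerate \<Sigma> x0" using nondeg' by blast
    then obtain U g G H where ch: "C2_chart \<Sigma> x0 U g G H" and
      ndH: "\<forall>lam. restricted_eigenvalue (second_fundamental_form G H x0)
                  {v. G x0 \<bullet> v = 0 \<and> x0 \<bullet> v = 0} lam \<longrightarrow> lam \<noteq> 0"
      unfolding transversally_nondegenerate_def by blast
    from ch have oU: "open U" and x0U: "x0 \<in> U"
      and dgU: "\<forall>y\<in>U. (g has_derivative (\<lambda>h. G y \<bullet> h)) (at y)"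
      and dGU: "\<forall>y\<in>U. (G has_derivative H y) (at y)"
      and GnzU: "\<forall>y\<in>U. G y \<noteq> 0"
      and contH: "\<forall>v. continuous_on U (\<lambda>y. H y v)"
      and frU: "U \<inter> frontier \<Sigma> = {y\<in>U. g y = 0}"
      unfolding C2_chart_def by blast+
    obtain r where r: "r > 0" and rG: "\<forall>x'\<in>frontier \<Sigma>. dist x' x0 < r \<longrightarrow> x' \<in> Gam"
      using Gopen x0G unfolding openin_euclidean_subtopology_iff by blast
    define U0 where "U0 = U \<inter> ball x0 r"
    have oU0: "open U0" using oU by (simp add: U0_def open_Int)
    have x0U0: "x0 \<in> U0" using x0U r by (simp add: U0_def)
    have U0U: "U0 \<subseteq> U" by (simp add: U0_def)
    have dg0: "\<forall>y\<in>U0. (g has_derivative (\<lambda>h. G y \<bullet> h)) (at y)" using dgU U0U by blast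
    have S: "z \<in> frontier \<Sigma> \<and> z \<in> Gam" if "z \<in> U0" "g z = 0" for z
    proof -
      have "z \<in> frontier \<Sigma>" using frU that U0U by blast
      moreover have "dist z x0 < r" using that by (simp add: U0_def dist_commute)
      ultimately show ?thesis using rG by blast
    qed
    have gx0: "g x0 = 0" using frU x0U x0G GamF by blast
    have Gx0: "G x0 \<noteq> 0" using GnzU x0U by blast
    obtain e where e0: "e \<noteq> 0" and eorth: "\<forall>z\<in>Gam. \<nu> z \<bullet> e = 0"
    proof -
      have "dim (\<nu> ` Gam) \<le> DIM(real^'n)" by (rule dim_subset_UNIV)
      moreover have "dim (\<nu> ` Gam) \<noteq> DIM(real^'n)" using nsp dim_eq_full by blast
      ultimately have "dim (\<nu> ` Gam) < DIM(real^'n)" by simp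
      then obtain x where "x \<noteq> 0" "\<And>y. y \<in> span (\<nu> ` Gam) \<Longrightarrow> orthogonal x y"
        using orthogonal_to_subspace_exists by blast
      moreover have "\<forall>z\<in>Gam. \<nu> z \<bullet> e = 0" if "\<And>y. y \<in> span (\<nu> ` Gam) \<Longrightarrow> orthogonal e y" for e
        using that span_base[of _ "\<nu> ` Gam"] by (metis imageI orthogonal_def inner_commute)
      ultimately show ?thesis using that by blast
    qed
    have stepA: "G z \<bullet> e = 0" if z: "z \<in> U0" "g z = 0" for z
    proof -
      have zG: "z \<in> Gam" using S[OF z] by blast
      obtain U' g' G' H' where ch': "C2_chart \<Sigma> z U' g' G' H'" and nu: "\<nu> z = (1 / norm (G' z)) *\<^sub>R G' z"
        using normal' zG unfolding exterior_unit_normal_def by blast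
      from ch' have oU': "open U'" and zU': "z \<in> U'"
        and dg': "(g' has_derivative (\<lambda>h. G' z \<bullet> h)) (at z)" and G'z: "G' z \<noteq> 0"
        and frU': "U' \<inter> frontier \<Sigma> = {y\<in>U'. g' y = 0}"
        unfolding C2_chart_def by blast+
      have "\<nu> z \<bullet> e = 0" using eorth zG by blast
      then have "(1 / norm (G' z)) * (G' z \<bullet> e) = 0" unfolding nu by (simp only: inner_scaleR_left)
      then have G'e: "G' z \<bullet> e = 0" using G'z by simp
      have orth: "G' z \<bullet> v = 0" if "G z \<bullet> v = 0" for v
      proof (rule deriv_vanish[of "U0 \<inter> U'" z g G v g' "\<lambda>h. G' z \<bullet> h"])
        show "open (U0 \<inter> U')" using oU0 oU' by (simp add: open_Int)
        show "z \<in> U0 \<inter> U'" using z zU' by simp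
        show "\<forall>y\<in>U0 \<inter> U'. (g has_derivative (\<lambda>h. G y \<bullet> h)) (at y)" using dg0 by blast
        show "g z = 0" by fact
        show "G z \<noteq> 0" using GnzU U0U z by blast
        show "G z \<bullet> v = 0" by fact
        show "(g' has_derivative (\<lambda>h. G' z \<bullet> h)) (at z)" by fact
        show "\<forall>y\<in>U0 \<inter> U'. g y = 0 \<longrightarrow> g' y = 0"
        proof (intro ballI impI)
          fix y assume "y \<in> U0 \<inter> U'" "g y = 0"
          then have "y \<in> U' \<inter> frontier \<Sigma>" using S[of y] by blast
          then show "g' y = 0" using frU' by blast
        qed
      qed
      have Gz: "G z \<noteq> 0" using GnzU U0U z by blast
      have "G' z \<bullet> G z \<noteq> 0"
      proof
        assume "G' z \<bullet> G z = 0"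
        then have "G' z \<bullet> G' z = 0" using orth[of "G' z"] by (simp add: inner_commute)
        then show False using G'z by simp
      qed
      moreover have "G' z \<bullet> (e - ((G z \<bullet> e) / (G z \<bullet> G z)) *\<^sub>R G z) = 0"
        using Gz by (intro orth) (simp add: inner_diff_right)
      ultimately show ?thesis using G'e Gz by (simp add: inner_diff_right)
    qed
    have stepB: "G z \<bullet> z = 0" if z: "z \<in> U0" "g z = 0" for z
    proof -
      obtain \<rho> where \<rho>: "\<rho> > 0" "ball z \<rho> \<subseteq> U0" using oU0 z(1) openE by blast
      define d where "d = min 1 (\<rho> / (norm z + 1))"
      have d: "d > 0" using \<rho> by (simp add: d_def add_nonneg_pos)
      have zF: "z \<in> frontier \<Sigma>" using S[OF z] by blast
      have loc: "\<forall>t. \<bar>1 - t\<bar> < d \<longrightarrow> g (1 *\<^sub>R z) = g (t *\<^sub>R z)"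
      proof (intro allI impI)
        fix t :: real assume t: "\<bar>1 - t\<bar> < d"
        then have tpos: "t > 0" by (simp add: d_def abs_less_iff)
        have "\<bar>1 - t\<bar> * (norm z + 1) < \<rho>"
          using t by (simp add: d_def pos_less_divide_eq add_nonneg_pos)
        then have "\<bar>1 - t\<bar> * norm z < \<rho>"
          by (smt (verit) abs_ge_zero mult_left_mono norm_ge_zero distrib_left mult.right_neutral)
        moreover have "z - t *\<^sub>R z = (1 - t) *\<^sub>R z" by (simp add: scaleR_diff_left)
        ultimately have "dist z (t *\<^sub>R z) < \<rho>"
          by (simp add: dist_norm)
        then have "t *\<^sub>R z \<in> U0" using \<rho>(2) mem_ball by blast
        moreover have "t *\<^sub>R z \<in> frontier \<Sigma>" using cone_frontier[OF cone zF tpos] .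
        ultimately have "g (t *\<^sub>R z) = 0" using frU U0U by blast
        then show "g (1 *\<^sub>R z) = g (t *\<^sub>R z)" using z by simp
      qed
      have "((\<lambda>t. t *\<^sub>R z) has_derivative (\<lambda>h. h *\<^sub>R z)) (at 1)"
        by (auto intro!: derivative_eq_intros)
      moreover have "(g has_derivative (\<lambda>h. G z \<bullet> h)) (at ((\<lambda>t. t *\<^sub>R z) 1))" using dg0 z by simp
      ultimately have "((\<lambda>t. g (t *\<^sub>R z)) has_derivative (\<lambda>h. G z \<bullet> (h *\<^sub>R z))) (at 1)"
        by (rule has_derivative_compose)
      moreover have "(\<lambda>h. G z \<bullet> (h *\<^sub>R z)) = (*) (G z \<bullet> z)" by (auto simp: fun_eq_iff)
      ultimately have "((\<lambda>t. g (t *\<^sub>R z)) has_field_derivative (G z \<bullet> z)) (at 1)"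
        by (simp add: has_field_derivative_def)
      then show ?thesis using DERIV_local_const[OF _ d loc] by blast
    qed
    have stepC: "H z v \<bullet> e = 0 \<and> H z v \<bullet> z = 0" if z: "z \<in> U0" "g z = 0" and v: "G z \<bullet> v = 0" for z v
    proof
      have Gz: "G z \<noteq> 0" using GnzU U0U z by blast
      have dGz: "(G has_derivative H z) (at z)" using dGU U0U z by blast
      show "H z v \<bullet> e = 0"
      proof (rule deriv_vanish[OF oU0 z(1) dg0 z(2) Gz v, of "\<lambda>w. G w \<bullet> e" "\<lambda>h. H z h \<bullet> e"])
        show "((\<lambda>w. G w \<bullet> e) has_derivative (\<lambda>h. H z h \<bullet> e)) (at z)"
          by (rule has_derivative_inner_left[OF dGz])
        show "\<forall>y\<in>U0. g y = 0 \<longrightarrow> G y \<bullet> e = 0" using stepA by blast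
      qed
      have "(\<lambda>h. G z \<bullet> h + H z h \<bullet> z) v = 0"
      proof (rule deriv_vanish[OF oU0 z(1) dg0 z(2) Gz v, of "\<lambda>w. G w \<bullet> w"])
        show "((\<lambda>w. G w \<bullet> w) has_derivative (\<lambda>h. G z \<bullet> h + H z h \<bullet> z)) (at z)"
          using has_derivative_inner[OF dGz has_derivative_ident] by simp
        show "\<forall>y\<in>U0. g y = 0 \<longrightarrow> G y \<bullet> y = 0" using stepB by blast
      qed
      then show "H z v \<bullet> z = 0" using v by simp
    qed
    define T where "T = {v. G x0 \<bullet> v = 0 \<and> x0 \<bullet> v = 0}"
    have ab: "G x0 \<bullet> x0 = 0" using stepB[OF x0U0 gx0] .
    have linH: "\<forall>y\<in>U. linear (H y)"
    proof
      fix y assume "y \<in> U"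
      then show "linear (H y)" using dGU by (intro has_derivative_linear[of G _ "at y"]) simp
    qed
    have key: "\<exists>w\<in>T. w \<noteq> 0 \<and> (\<forall>v\<in>T. H x0 v \<bullet> w = 0)"
    proof -
      define c where "c = (e \<bullet> x0) / (x0 \<bullet> x0)"
      define w where "w = e - c *\<^sub>R x0"
      show ?thesis
      proof (cases "w = 0")
        case False
        have "G x0 \<bullet> w = 0" using stepA[OF x0U0 gx0] ab by (simp add: w_def inner_diff_right)
        moreover have "x0 \<bullet> w = 0"
          by (cases "x0 = 0") (simp_all add: w_def c_def inner_diff_right inner_commute)
        ultimately have wT: "w \<in> T" by (simp add: T_def)
        show ?thesis
        proof (intro bexI[OF _ wT] conjI False ballI)
          fix v assume "v \<in> T"
          then have "G x0 \<bullet> v = 0" by (simp add: T_def)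
          from stepC[OF x0U0 gx0 this] show "H x0 v \<bullet> w = 0" by (simp add: w_def inner_diff_right)
        qed
      next
        case True
        then have ec: "e = c *\<^sub>R x0" by (simp add: w_def)
        then have c0: "c \<noteq> 0" using e0 by auto
        have stepC': "H z v \<bullet> x0 = 0" if "z \<in> U0" "g z = 0" "G z \<bullet> v = 0" for z v
          using stepC[OF that] c0 ec by simp
        obtain v0 where v00: "v0 \<noteq> 0" and v0T: "v0 \<in> T"
        proof -
          have "dim {G x0, x0} \<le> card {G x0, x0}" by (rule dim_le_card') simp
          also have "\<dots> \<le> 2" by (simp add: card_insert_if)
          also have "\<dots> < DIM(real^'n)" using N3 by simp
          finally obtain x where "x \<noteq> 0" "\<And>y. y \<in> span {G x0, x0} \<Longrightarrow> orthogonal x y"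
            using orthogonal_to_subspace_exists by blast
          moreover have "x \<in> T" if "\<And>y. y \<in> span {G x0, x0} \<Longrightarrow> orthogonal x y" for x
            using that[of "G x0"] that[of x0] span_base[of _ "{G x0, x0}"]
            by (simp add: orthogonal_def inner_commute T_def)
          ultimately show ?thesis using that by blast
        qed
        have Gv0: "G x0 \<bullet> v0 = 0" using v0T by (simp add: T_def)
        show ?thesis
        proof (intro bexI[OF _ v0T] conjI v00 ballI)
          fix v assume vT: "v \<in> T"
          have Gv: "G x0 \<bullet> v = 0" using vT by (simp add: T_def)
          obtain s \<tau> where st: "\<And>k. s k > 0 \<and> x0 + s k *\<^sub>R v0 + \<tau> k *\<^sub>R G x0 \<in> U0
              \<and> g (x0 + s k *\<^sub>R v0 + \<tau> k *\<^sub>R G x0) = 0" and s0: "s \<longlonglongrightarrow> 0"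
              and r0: "(\<lambda>k. \<tau> k / s k) \<longlonglongrightarrow> 0"
            using curve_seq[OF oU0 x0U0 dg0 gx0 Gx0 Gv0] by blast
          define r where "r k = \<tau> k / s k" for k
          define y where "y k = x0 + s k *\<^sub>R v0 + \<tau> k *\<^sub>R G x0" for k
          have r0': "r \<longlonglongrightarrow> 0" using r0 by (simp add: r_def[abs_def])
          have yx: "y k - x0 = s k *\<^sub>R (v0 + r k *\<^sub>R G x0)" for k
            using st[of k] by (simp add: y_def r_def scaleR_add_right)
          have yU0: "y k \<in> U0" and gy: "g (y k) = 0" for k using st[of k] by (simp_all add: y_def)
          have yU: "\<forall>k. y k \<in> U" using yU0 U0U by blast
          have ylim: "y \<longlonglongrightarrow> x0"
          proof -
            have "(\<lambda>k. x0 + s k *\<^sub>R (v0 + r k *\<^sub>R G x0)) \<longlonglongrightarrow> x0 + 0 *\<^sub>R (v0 + 0 *\<^sub>R G x0)"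
              by (intro tendsto_intros s0 r0')
            moreover have "(\<lambda>k. x0 + s k *\<^sub>R (v0 + r k *\<^sub>R G x0)) = y"
              using yx by (auto simp: algebra_simps fun_eq_iff)
            ultimately show ?thesis by simp
          qed
          have Glim: "(\<lambda>k. G (y k)) \<longlonglongrightarrow> G x0"
            using isCont_tendsto_compose[OF has_derivative_continuous[OF dGU[rule_format, OF x0U]] ylim] .
          define vk where "vk k = v - ((G (y k) \<bullet> v) / (G (y k) \<bullet> G (y k))) *\<^sub>R G (y k)" for k
          have vlim: "vk \<longlonglongrightarrow> v - ((G x0 \<bullet> v) / (G x0 \<bullet> G x0)) *\<^sub>R G x0"
            unfolding vk_def[abs_def] using Gx0
            by (intro tendsto_diff[OF tendsto_const] tendsto_scaleR[OF tendsto_divide[OF tendsto_inner[OF Glim tendsto_const]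
                tendsto_inner[OF Glim Glim]] Glim]) simp
          then have vlim': "vk \<longlonglongrightarrow> v" using Gv by simp
          have zero: "H (y k) (vk k) \<bullet> (v0 + r k *\<^sub>R G x0) = 0" for k
          proof -
            have Gyk: "G (y k) \<noteq> 0" using GnzU yU by blast
            then have "G (y k) \<bullet> vk k = 0" by (simp add: vk_def inner_diff_right)
            from stepC[OF yU0 gy this] stepC'[OF yU0 gy this]
            have "H (y k) (vk k) \<bullet> (y k - x0) = 0" by (simp add: inner_diff_right)
            then have "s k * (H (y k) (vk k) \<bullet> (v0 + r k *\<^sub>R G x0)) = 0" by (simp add: yx)
            then show ?thesis using st[of k] by simp
          qed
          have lim: "(\<lambda>k. H (y k) (vk k) \<bullet> (v0 + r k *\<^sub>R G x0)) \<longlonglongrightarrow> H x0 v \<bullet> (v0 + 0 *\<^sub>R G x0)"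
            by (rule tendsto_inner[OF joint_cont[OF contH linH ylim x0U yU vlim']
                tendsto_add[OF tendsto_const tendsto_scaleR[OF r0' tendsto_const]]])
          then have "(\<lambda>k. 0::real) \<longlonglongrightarrow> H x0 v \<bullet> v0" using zero by simp
          then show "H x0 v \<bullet> v0 = 0" using LIMSEQ_unique[OF tendsto_const] by metis
        qed
      qed
    qed
    then obtain w where wT: "w \<in> T" "w \<noteq> 0" and hw: "\<forall>v\<in>T. H x0 v \<bullet> w = 0" by blast
    from transpose_kernel[OF linH[rule_format, OF x0U] ab T_def wT hw]
    obtain u where uT: "u \<in> T" "u \<noteq> 0" and hu: "\<forall>v\<in>T. H x0 u \<bullet> v = 0"
      by blast
    have "restricted_eigenvalue (second_fundamental_form G H x0) T 0"
      unfolding restricted_eigenvalue_def second_fundamental_form_def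
    proof (rule bexI[of _ u])
      show "u \<noteq> 0 \<and> (\<forall>w\<in>T. H x0 u \<bullet> w / norm (G x0) = 0 * (u \<bullet> w))"
        using uT(2) hu by simp
    qed (rule uT(1))
    then have "(0::real) \<noteq> 0" using ndH unfolding T_def by blast
    then show False by simp
  qed
qed

end
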